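(* Let $n\ge 2$, let $P\subset B_\infty^d(1)$ with $|P|=n$, and let $\sigma:P\to\{-1,+1\}$. Let $\rho$ be an integer with $\rho+1\ge 2e^2d(\sqrt{3\log n}+3)+\log n+2d$, and define the polynomial \[\mathcal{P}_{P,\rho}(x)=\sum_{k=0}^{\rho}\frac{2^k}{k!}\sum_{p\in P}\sigma(p)e^{-\|p\|^2}\langle p,x\rangle^k .\] Then for every $x\in B_\infty^d(\sqrt{3\log n}+3)$, \[\left|\sum_{p\in P}\sigma(p)e^{2\|p\|^2}e^{-\frac13\|x-3p\|^2}-e^{-\frac13\|x\|^2}\mathcal{P}_{P,\rho}(x)\right|\le 1.\]
   Context: $\log$ is the natural logarithm. $B_\infty^d(r)=\{x\in\mathbb{R}^d:|x_j|<r\text{ for all }j\}$. $\|\cdot\|$ is the Euclidean norm and $\langle\cdot,\cdot\rangle$ the standard inner product. *)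

theory Defs
  imports "HOL-Analysis.Analysis"
begin

definition box_inf :: "real \<Rightarrow> (real^'d) set" where
  "box_inf r = {x. \<forall>j. \<bar>x $ j\<bar> < r}"

definition poly_P :: "(real^'d) set \<Rightarrow> (real^'d \<Rightarrow> real) \<Rightarrow> int \<Rightarrow> real^'d \<Rightarrow> real" where
  "poly_P P sg rho x =
     (\<Sum>k=0..nat rho. (2 ^ k / fact k) *
        (\<Sum>p\<in>P. sg p * exp (- (norm p)\<^sup>2) * (inner p x) ^ k))"

end

theory Submission
  imports Defs
begin

lemma exp_tail:
  fixes t :: real
  shows "\<bar>exp t - (\<Sum>k<m. t^k / fact k)\<bar> \<le> exp (- real m) * exp (exp 1 * \<bar>t\<bar>)"
proof -
  define u where "u = exp 1 * \<bar>t\<bar>"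
  have u0: "u \<ge> 0" unfolding u_def by simp
  have s1: "(\<lambda>k. t^k / fact k) sums exp t" using exp_converges[of t] by (simp add: divide_inverse mult.commute)
  have s2: "(\<lambda>i. t^(i+m) / fact (i+m)) sums (exp t - (\<Sum>k<m. t^k / fact k))"
    using sums_split_initial_segment[OF s1] by simp
  have g1: "(\<lambda>k. u^k / fact k) sums exp u" using exp_converges[of u] by (simp add: divide_inverse mult.commute)
  have g2: "(\<lambda>i. u^(i+m) / fact (i+m)) sums (exp u - (\<Sum>k<m. u^k / fact k))"
    using sums_split_initial_segment[OF g1] by simp
  have g3: "(\<lambda>i. exp (- real m) * (u^(i+m) / fact (i+m))) sums (exp (- real m) * (exp u - (\<Sum>k<m. u^k / fact k)))"
    by (rule sums_mult[OF g2])
  have trm: "\<bar>t^(i+m) / fact (i+m)\<bar> \<le> exp (- real m) * (u^(i+m) / fact (i+m))" for i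
  proof -
    have e: "exp (- real m) * exp 1 ^ (i+m) = exp (real i)"
      by (simp add: exp_of_nat_mult[symmetric] exp_add[symmetric] algebra_simps)
    have "\<bar>t^(i+m) / fact (i+m)\<bar> = 1 * (\<bar>t\<bar>^(i+m) / fact (i+m))" by (simp add: power_abs)
    also have "\<dots> \<le> exp (real i) * (\<bar>t\<bar>^(i+m) / fact (i+m))"
      by (rule mult_right_mono) auto
    also have "\<dots> = exp (- real m) * (u^(i+m) / fact (i+m))"
      unfolding u_def power_mult_distrib e[symmetric] by simp
    finally show ?thesis .
  qed
  have sa: "summable (\<lambda>i. \<bar>t^(i+m) / fact (i+m)\<bar>)"
    by (rule summable_rabs_comparison_test[OF _ sums_summable[OF g3]]) (use trm in blast)
  have "\<bar>exp t - (\<Sum>k<m. t^k / fact k)\<bar> = \<bar>\<Sum>i. t^(i+m) / fact (i+m)\<bar>"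
    using s2 by (simp add: sums_iff)
  also have "\<dots> \<le> (\<Sum>i. \<bar>t^(i+m) / fact (i+m)\<bar>)" by (rule summable_rabs[OF sa])
  also have "\<dots> \<le> (\<Sum>i. exp (- real m) * (u^(i+m) / fact (i+m)))"
    by (rule suminf_le[OF trm sa sums_summable[OF g3]])
  also have "\<dots> = exp (- real m) * (exp u - (\<Sum>k<m. u^k / fact k))" using g3 by (simp add: sums_iff)
  also have "\<dots> \<le> exp (- real m) * exp u"
    using u0 by (intro mult_left_mono) (auto intro!: sum_nonneg)
  finally show ?thesis unfolding u_def .
qed

theorem mainTheorem4:
  fixes P :: "(real^'d) set" and sg :: "real^'d \<Rightarrow> real"
    and n :: nat and rho :: int and x :: "real^'d"
  assumes "n \<ge> 2"
    and "finite P" and "card P = n" and "P \<subseteq> box_inf 1"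
    and "\<forall>p\<in>P. sg p \<in> {-1, 1}"
    and "real_of_int rho + 1 \<ge>
           2 * exp 2 * real CARD('d) * (sqrt (3 * ln (real n)) + 3) + ln (real n) + 2 * real CARD('d)"
    and "x \<in> box_inf (sqrt (3 * ln (real n)) + 3)"
  shows "\<bar>(\<Sum>p\<in>P. sg p * exp (2 * (norm p)\<^sup>2) * exp (- (1/3) * (norm (x - 3 *\<^sub>R p))\<^sup>2))
           - exp (- (1/3) * (norm x)\<^sup>2) * poly_P P sg rho x\<bar> \<le> 1"
proof -
  define R where "R = sqrt (3 * ln (real n)) + 3"
  define d where "d = real CARD('d)"
  define m where "m = Suc (nat rho)"
  define E where "E = exp (- (1/3) * (norm x)\<^sup>2)"
  define S where "S = (\<lambda>t::real. \<Sum>k<m. t^k / fact k)"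
  have n1: "real n \<ge> 2" using assms(1) by simp
  have lnn: "ln (real n) \<ge> 0" using n1 by simp
  have R0: "R \<ge> 0" unfolding R_def by (smt (verit) real_sqrt_ge_zero lnn)
  have d1: "d \<ge> 1" unfolding d_def by simp
  have dR: "d * R \<ge> 0" using R0 d1 by simp
  have e2: "exp 2 \<ge> exp (1::real)" by simp
  have "0 \<le> (2 * exp 2) * (d * R)" using dR by simp
  then have "2 * exp 2 * d * R \<ge> 0" by (simp add: mult.assoc)
  then have rho0: "rho \<ge> 0" using assms(6) lnn d1 unfolding R_def d_def by linarith
  have mr: "real m = real_of_int rho + 1" unfolding m_def using rho0 by simp
  have ip: "\<bar>inner p x\<bar> \<le> d * R" if "p \<in> P" for p
  proof -
    have pP: "p \<in> box_inf 1" using assms(4) that by blast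
    have pj: "\<bar>p $ j\<bar> \<le> 1" for j using pP unfolding box_inf_def by (simp add: less_imp_le)
    have xj: "\<bar>x $ j\<bar> \<le> R" for j using assms(7) unfolding box_inf_def R_def by (simp add: less_imp_le)
    have "\<bar>inner p x\<bar> = \<bar>\<Sum>j\<in>UNIV. p $ j * x $ j\<bar>" by (simp add: inner_vec_def)
    also have "\<dots> \<le> (\<Sum>j\<in>UNIV. \<bar>p $ j * x $ j\<bar>)" by (rule sum_abs)
    also have "\<dots> \<le> (\<Sum>j\<in>(UNIV::'d set). R)"
    proof (rule sum_mono)
      fix j :: 'd
      have "\<bar>p $ j * x $ j\<bar> = \<bar>p $ j\<bar> * \<bar>x $ j\<bar>" by (simp add: abs_mult)
      also have "\<dots> \<le> 1 * R" by (rule mult_mono) (use pj xj R0 in auto)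
      finally show "\<bar>p $ j * x $ j\<bar> \<le> R" by simp
    qed
    also have "\<dots> = d * R" unfolding d_def by simp
    finally show ?thesis .
  qed
  have key: "exp (2 * (norm p)\<^sup>2) * exp (- (1/3) * (norm (x - 3 *\<^sub>R p))\<^sup>2)
      = E * (exp (- (norm p)\<^sup>2) * exp (2 * inner p x))" for p
  proof -
    have "(norm (x - 3 *\<^sub>R p))\<^sup>2 = (norm x)\<^sup>2 - 6 * inner p x + 9 * (norm p)\<^sup>2"
      by (simp add: power2_norm_eq_inner inner_diff_left inner_diff_right inner_commute algebra_simps)
    then show ?thesis unfolding E_def by (simp add: exp_add[symmetric] algebra_simps)
  qed
  have poly: "poly_P P sg rho x = (\<Sum>p\<in>P. sg p * exp (- (norm p)\<^sup>2) * S (2 * inner p x))"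
  proof -
    have "{0..nat rho} = {..<m}" unfolding m_def by auto
    then have "poly_P P sg rho x = (\<Sum>k<m. \<Sum>p\<in>P. (2 ^ k / fact k) * (sg p * exp (- (norm p)\<^sup>2) * (inner p x) ^ k))"
      unfolding poly_P_def by (simp add: sum_distrib_left)
    also have "\<dots> = (\<Sum>p\<in>P. \<Sum>k<m. sg p * exp (- (norm p)\<^sup>2) * ((2 * inner p x)^k / fact k))"
      by (subst sum.swap) (simp add: power_mult_distrib algebra_simps)
    also have "\<dots> = (\<Sum>p\<in>P. sg p * exp (- (norm p)\<^sup>2) * S (2 * inner p x))"
      unfolding S_def by (simp add: sum_distrib_left)
    finally show ?thesis .
  qed
  have diff: "(\<Sum>p\<in>P. sg p * exp (2 * (norm p)\<^sup>2) * exp (- (1/3) * (norm (x - 3 *\<^sub>R p))\<^sup>2))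
           - E * poly_P P sg rho x
      = E * (\<Sum>p\<in>P. sg p * exp (- (norm p)\<^sup>2) * (exp (2 * inner p x) - S (2 * inner p x)))"
  proof -
    have "(\<Sum>p\<in>P. sg p * exp (2 * (norm p)\<^sup>2) * exp (- (1/3) * (norm (x - 3 *\<^sub>R p))\<^sup>2))
        = (\<Sum>p\<in>P. E * (sg p * exp (- (norm p)\<^sup>2) * exp (2 * inner p x)))"
      by (rule sum.cong) (simp_all only: mult.assoc key, simp add: algebra_simps)
    then show ?thesis unfolding poly
      by (simp add: sum_distrib_left sum_subtractf[symmetric] right_diff_distrib)
  qed
  have E1: "E \<le> 1" "E \<ge> 0" unfolding E_def by auto
  define B where "B = exp (- real m) * exp (exp 1 * (2 * (d * R)))"
  have tb: "\<bar>sg p * exp (- (norm p)\<^sup>2) * (exp (2 * inner p x) - S (2 * inner p x))\<bar> \<le> B"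
    if "p \<in> P" for p
  proof -
    have sg: "\<bar>sg p\<bar> = 1" using assms(5) that by auto
    have ep: "exp (- (norm p)\<^sup>2) \<le> 1" by simp
    have t: "\<bar>exp (2 * inner p x) - S (2 * inner p x)\<bar> \<le> B"
    proof -
      have "\<bar>exp (2 * inner p x) - S (2 * inner p x)\<bar> \<le> exp (- real m) * exp (exp 1 * \<bar>2 * inner p x\<bar>)"
        unfolding S_def by (rule exp_tail)
      also have "\<dots> \<le> B" unfolding B_def using ip[OF that]
        by (intro mult_left_mono) (auto simp: abs_mult)
      finally show ?thesis .
    qed
    have "\<bar>sg p * exp (- (norm p)\<^sup>2) * (exp (2 * inner p x) - S (2 * inner p x))\<bar>
        = exp (- (norm p)\<^sup>2) * \<bar>exp (2 * inner p x) - S (2 * inner p x)\<bar>"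
      by (simp add: abs_mult sg)
    also have "\<dots> \<le> 1 * B" by (rule mult_mono) (use ep t in auto)
    finally show ?thesis by simp
  qed
  have "\<bar>E * (\<Sum>p\<in>P. sg p * exp (- (norm p)\<^sup>2) * (exp (2 * inner p x) - S (2 * inner p x)))\<bar>
      \<le> 1 * (\<Sum>p\<in>P. B)"
    unfolding abs_mult using E1
    by (intro mult_mono order.trans[OF sum_abs sum_mono]) (auto intro: tb)
  also have "\<dots> = real n * B" using assms(3) by simp
  also have "\<dots> \<le> 1"
  proof -
    have "real n = exp (ln (real n))" using n1 by simp
    then have "real n * B = exp (ln (real n) - real m + exp 1 * (2 * (d * R)))"
      unfolding B_def by (simp only: exp_add exp_diff exp_minus) (simp add: field_simps)
    also have "\<dots> \<le> exp 0"
    proof -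
      have "exp 1 * (2 * (d * R)) \<le> exp 2 * (2 * (d * R))" by (rule mult_right_mono) (use e2 dR in auto)
      then show ?thesis using assms(6) mr d1 unfolding R_def d_def by (simp add: algebra_simps)
    qed
    finally show ?thesis by simp
  qed
  finally show ?thesis using diff unfolding E_def by simp
qed

end
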